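(* Let $G_{1,N}$ be a geometric random variable on $\{1,2,\dots\}$ with parameter $e^{-\lambda_NT_N}$, where $\lambda_NT_N=\beta\log(\kappa N)$ for constants $\kappa,\beta>0$. For $n\in\mathbb{N}$ let $$M_N(n)=E\Big[\Big(\frac{G_{1,N}}{G_{1,N}+N-1}\Big)^n\Big].$$ Then: \begin{enumerate} \item If $\beta>1$, $\lim_{N\to\infty}M_N(n)=1$. \item If $\beta=1$, $\lim_{N\to\infty}M_N(n)=E[Y_\kappa^n]$, where $Y_\kappa$ is a $[0,1]$-valued random variable with $\mathbb{P}(Y_\kappa>x)=e^{-\frac{x}{\kappa(1-x)}}$, $x\in[0,1]$. \item If $\beta<1$, $M_N(n)\sim n!\,\kappa^{n\beta}N^{-n(1-\beta)}$ as $N\to\infty$. \end{enumerate}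
   Context: A geometric random variable $G$ on $\{1,2,\dots\}$ with parameter $p$ satisfies $\mathbb{P}(G>k)=(1-p)^k$ for $k\ge0$. $f\sim g$ means $f/g\to1$. *)

theory Defs
  imports "HOL-Probability.Probability"
begin

definition geom_param :: "real \<Rightarrow> real \<Rightarrow> nat \<Rightarrow> real" where
  "geom_param \<kappa> \<beta> N = exp (- (\<beta> * ln (\<kappa> * real N)))"

text \<open>G = 1 + X with X ~ geometric_pmf p on {0,1,...}, so P(G > k) = (1-p)^k.
  M_N(n) = E[(G/(G+N-1))^n].\<close>
definition M :: "real \<Rightarrow> real \<Rightarrow> nat \<Rightarrow> nat \<Rightarrow> real" where
  "M \<kappa> \<beta> N n = measure_pmf.expectation (geometric_pmf (geom_param \<kappa> \<beta> N))
     (\<lambda>k. (real (k + 1) / (real (k + 1) + real N - 1)) ^ n)"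

end

theory Submission
  imports Defs
begin

lemma pow_as_integral:
  fixes z :: real and n :: nat
  assumes "0 \<le> z" "n \<ge> 1"
  shows "ennreal (z ^ n) = (\<integral>\<^sup>+x. ennreal (indicator {0..<z} x * (real n * x ^ (n - 1))) \<partial>lborel)"
proof -
  have d: "((\<lambda>x. x ^ n) has_vector_derivative (real n * x ^ (n - 1))) (at x within {0..z})" for x :: real
    using DERIV_pow[of n x "{0..z}"] by (simp add: has_real_derivative_iff_has_vector_derivative)
  have c: "continuous_on {0..z} (\<lambda>x::real. real n * x ^ (n - 1))"
    by (intro continuous_intros)
  have I: "integral\<^sup>L lborel (\<lambda>x. indicator {0 .. z} x *\<^sub>R (real n * x ^ (n - 1))) = z ^ n - 0 ^ n"
    by (rule integral_FTC_atLeastAtMost[OF assms(1) d c])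
  have I': "integral\<^sup>L lborel (\<lambda>x. indicator {0 .. z} x *\<^sub>R (real n * x ^ (n - 1))) = z ^ n"
    using I assms(2) by simp
  have int: "integrable lborel (\<lambda>x. indicator {0 .. z} x *\<^sub>R (real n * x ^ (n - 1)))"
    using borel_integrable_atLeastAtMost'[OF c] unfolding set_integrable_def .
  have "(\<integral>\<^sup>+x. ennreal (indicator {0..<z} x * (real n * x ^ (n - 1))) \<partial>lborel)
      = (\<integral>\<^sup>+x. ennreal (indicator {0 .. z} x *\<^sub>R (real n * x ^ (n - 1))) \<partial>lborel)"
    using AE_lborel_singleton[of z]
    by (intro nn_integral_cong_AE) (auto elim!: eventually_mono simp: indicator_def)
  also have "\<dots> = ennreal (integral\<^sup>L lborel (\<lambda>x. indicator {0 .. z} x *\<^sub>R (real n * x ^ (n - 1))))"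
    by (rule nn_integral_eq_integral[OF int]) (auto simp: indicator_def)
  also have "\<dots> = ennreal (z ^ n)" by (simp only: I')
  finally show ?thesis ..
qed

lemma tail_formula:
  fixes P :: "'a measure" and Z :: "'a \<Rightarrow> real" and n :: nat
  assumes P: "prob_space P" and Zm[measurable]: "Z \<in> borel_measurable P"
    and Zb: "\<And>\<omega>. \<omega> \<in> space P \<Longrightarrow> 0 \<le> Z \<omega> \<and> Z \<omega> \<le> 1" and n: "n \<ge> 1"
  shows "(\<integral>\<omega>. Z \<omega> ^ n \<partial>P) =
    (\<integral>x. indicator {0..<1} x * (real n * x ^ (n - 1)) * measure P {\<omega>\<in>space P. x < Z \<omega>} \<partial>lborel)"
proof -
  interpret prob_space P by fact
  interpret pair_sigma_finite lborel P
    by (intro pair_sigma_finite.intro lborel.sigma_finite_measure_axioms) unfold_locales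
  define H where "H x = indicator {0..<1} x * (real n * x ^ (n - 1)) * measure P {\<omega>\<in>space P. x < Z \<omega>}" for x
  have mono: "mono (\<lambda>x. - measure P {\<omega>\<in>space P. x < Z \<omega>})"
    by (auto simp: mono_def intro!: finite_measure_mono)
  have Hm: "H \<in> borel_measurable lborel"
  proof -
    have q[measurable]: "(\<lambda>x. measure P {\<omega>\<in>space P. x < Z \<omega>}) \<in> borel_measurable borel"
      using borel_measurable_uminus[OF borel_measurable_mono[OF mono]] by simp
    show ?thesis unfolding H_def[abs_def] by measurable
  qed
  have Hnn: "0 \<le> H x" for x unfolding H_def by (auto simp: indicator_def)
  have "(\<integral>\<^sup>+\<omega>. ennreal (Z \<omega> ^ n) \<partial>P) =
      (\<integral>\<^sup>+\<omega>. (\<integral>\<^sup>+x. ennreal (indicator {0..<Z \<omega>} x * (real n * x ^ (n - 1))) \<partial>lborel) \<partial>P)"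
    using Zb n by (intro nn_integral_cong pow_as_integral) auto
  also have "\<dots> = (\<integral>\<^sup>+x. (\<integral>\<^sup>+\<omega>. ennreal (indicator {0..<Z \<omega>} x * (real n * x ^ (n - 1))) \<partial>P) \<partial>lborel)"
  proof (rule Fubini')
    have "(\<lambda>(x, \<omega>). ennreal (indicator {0..<Z \<omega>} x * (real n * x ^ (n - 1))))
       = (\<lambda>(x, \<omega>). ennreal (if 0 \<le> x \<and> x < Z \<omega> then real n * x ^ (n - 1) else 0))"
      by (auto simp: indicator_def fun_eq_iff)
    also have "\<dots> \<in> borel_measurable (lborel \<Otimes>\<^sub>M P)"
      by measurable
    finally show "(\<lambda>(x, \<omega>). ennreal (indicator {0..<Z \<omega>} x * (real n * x ^ (n - 1)))) \<in> borel_measurable (lborel \<Otimes>\<^sub>M P)" .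
  qed
  also have "\<dots> = (\<integral>\<^sup>+x. ennreal (H x) \<partial>lborel)"
  proof (intro nn_integral_cong)
    fix x :: real
    have "(\<integral>\<^sup>+\<omega>. ennreal (indicator {0..<Z \<omega>} x * (real n * x ^ (n - 1))) \<partial>P)
        = (\<integral>\<^sup>+\<omega>. ennreal (indicator {0..<1} x * (real n * x ^ (n - 1))) * indicator {\<omega>\<in>space P. x < Z \<omega>} \<omega> \<partial>P)"
      apply (intro nn_integral_cong) subgoal for w using Zb[of w] by (auto simp: indicator_def) done
    also have "\<dots> = ennreal (indicator {0..<1} x * (real n * x ^ (n - 1))) * emeasure P {\<omega>\<in>space P. x < Z \<omega>}"
      by (rule nn_integral_cmult_indicator) measurable
    also have "\<dots> = ennreal (H x)"
      unfolding H_def emeasure_eq_measure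
      by (subst ennreal_mult[symmetric]) (auto simp: indicator_def)
    finally show "(\<integral>\<^sup>+\<omega>. ennreal (indicator {0..<Z \<omega>} x * (real n * x ^ (n - 1))) \<partial>P) = ennreal (H x)" .
  qed
  finally have eq: "(\<integral>\<^sup>+\<omega>. ennreal (Z \<omega> ^ n) \<partial>P) = (\<integral>\<^sup>+x. ennreal (H x) \<partial>lborel)" .
  have intZ: "integrable P (\<lambda>\<omega>. Z \<omega> ^ n)"
    by (rule integrable_const_bound[where B=1]) (use Zb in \<open>auto intro!: power_le_one\<close>)
  have Zeq: "(\<integral>\<^sup>+\<omega>. ennreal (Z \<omega> ^ n) \<partial>P) = ennreal (\<integral>\<omega>. Z \<omega> ^ n \<partial>P)"
    using Zb by (intro nn_integral_eq_integral intZ) auto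
  have intH: "integrable lborel H"
    using Hm Hnn by (intro integrableI_nonneg) (simp_all add: eq[symmetric] Zeq)
  have "(\<integral>\<^sup>+x. ennreal (H x) \<partial>lborel) = ennreal (integral\<^sup>L lborel H)"
    using Hnn by (intro nn_integral_eq_integral intH) auto
  with eq Zeq have "ennreal (\<integral>\<omega>. Z \<omega> ^ n \<partial>P) = ennreal (integral\<^sup>L lborel H)" by simp
  moreover have "0 \<le> (\<integral>\<omega>. Z \<omega> ^ n \<partial>P)" using Zb by (intro integral_nonneg_AE AE_I2) auto
  moreover have "0 \<le> integral\<^sup>L lborel H" using Hnn by (intro integral_nonneg_AE AE_I2) auto
  ultimately have "(\<integral>\<omega>. Z \<omega> ^ n \<partial>P) = integral\<^sup>L lborel H"
    using ennreal_inj by blast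
  then show ?thesis by (simp only: H_def[abs_def])
qed

lemma geo_sum: "(\<Sum>k<m. (1 - p) ^ k * p) = 1 - (1 - p) ^ m" for p :: real
  by (induction m) (auto simp: algebra_simps)

lemma geo_tail:
  assumes "0 < p" "p \<le> 1"
  shows "measure_pmf.prob (geometric_pmf p) {k. m \<le> k} = (1 - p) ^ m"
proof -
  have "{k. m \<le> k} = space (measure_pmf (geometric_pmf p)) - {..<m}" by auto
  then have "measure_pmf.prob (geometric_pmf p) {k. m \<le> k} = 1 - measure_pmf.prob (geometric_pmf p) {..<m}"
    using measure_pmf.prob_compl[where A="{..<m}" and M="geometric_pmf p"] by simp
  also have "measure_pmf.prob (geometric_pmf p) {..<m} = (\<Sum>k<m. (1 - p) ^ k * p)"
    using assms by (subst measure_measure_pmf_finite) auto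
  finally show ?thesis by (simp add: geo_sum)
qed

lemma set_eq_floor:
  fixes x :: real and N :: nat
  assumes "N \<ge> 1" "0 \<le> x" "x < 1"
  shows "{k. x < real (k + 1) / (real (k + 1) + real N - 1)} = {k. nat \<lfloor>x * (real N - 1) / (1 - x)\<rfloor> \<le> k}"
proof -
  have "x < real (k + 1) / (real (k + 1) + real N - 1) \<longleftrightarrow> nat \<lfloor>x * (real N - 1) / (1 - x)\<rfloor> \<le> k" for k
  proof -
    have b: "real (k + 1) + real N - 1 > 0" using assms by auto
    have "x < real (k + 1) / (real (k + 1) + real N - 1) \<longleftrightarrow> x * (real (k + 1) + real N - 1) < real (k + 1)"
      using b by (simp add: less_divide_eq)
    also have "\<dots> \<longleftrightarrow> x * (real N - 1) < real (k + 1) * (1 - x)" by (simp add: algebra_simps)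
    also have "\<dots> \<longleftrightarrow> x * (real N - 1) / (1 - x) < real (k + 1)"
      using assms by (simp add: divide_less_eq)
    also have "\<dots> \<longleftrightarrow> \<lfloor>x * (real N - 1) / (1 - x)\<rfloor> < int k + 1"
      by (metis floor_less_iff of_int_1 of_int_add of_int_of_nat_eq of_nat_Suc add.commute Suc_eq_plus1)
    also have "\<dots> \<longleftrightarrow> nat \<lfloor>x * (real N - 1) / (1 - x)\<rfloor> \<le> k"
      by linarith
    finally show ?thesis .
  qed
  then show ?thesis by blast
qed

lemma Q_formula:
  fixes x :: real and N :: nat
  assumes "N \<ge> 1" "0 \<le> x" "x < 1" "0 < p" "p \<le> 1"
  shows "measure_pmf.prob (geometric_pmf p) {k. x < real (k + 1) / (real (k + 1) + real N - 1)}
     = (1 - p) ^ nat \<lfloor>x * (real N - 1) / (1 - x)\<rfloor>"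
  using assms by (subst set_eq_floor[OF assms(1-3)]) (simp add: geo_tail)

lemma pow_bounds:
  fixes p :: real
  assumes "0 \<le> p" "p < 1"
  shows "exp (- (p * real m / (1 - p))) \<le> (1 - p) ^ m" "(1 - p) ^ m \<le> exp (- (p * real m))"
proof -
  have "1 - p \<le> exp (- p)" using exp_ge_add_one_self[of "-p"] by simp
  then have "(1 - p) ^ m \<le> exp (- p) ^ m" using assms by (intro power_mono) auto
  also have "\<dots> = exp (- (p * real m))" by (simp add: exp_of_nat_mult[symmetric] mult.commute)
  finally show "(1 - p) ^ m \<le> exp (- (p * real m))" .
  have "1 + p / (1 - p) \<le> exp (p / (1 - p))" by (rule exp_ge_add_one_self)
  moreover have "1 + p / (1 - p) = 1 / (1 - p)" using assms by (simp add: field_simps)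
  ultimately have "1 / (1 - p) \<le> exp (p / (1 - p))" by simp
  then have "exp (- (p / (1 - p))) \<le> 1 - p"
    using assms by (simp add: exp_minus field_simps)
  then have "exp (- (p / (1 - p))) ^ m \<le> (1 - p) ^ m" by (intro power_mono) auto
  moreover have "exp (- (p / (1 - p))) ^ m = exp (- (p * real m / (1 - p)))"
    by (simp add: exp_of_nat_mult[symmetric] field_simps)
  ultimately show "exp (- (p * real m / (1 - p))) \<le> (1 - p) ^ m" by simp
qed

lemma geo_lim:
  fixes p t :: "nat \<Rightarrow> real" and m :: "nat \<Rightarrow> nat"
  assumes p0: "p \<longlonglongrightarrow> 0" and pp: "eventually (\<lambda>N. 0 \<le> p N \<and> p N < 1) sequentially"
    and pt: "(\<lambda>N. p N * t N) \<longlonglongrightarrow> L"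
    and mt: "eventually (\<lambda>N. t N - 1 \<le> real (m N) \<and> real (m N) \<le> t N) sequentially"
  shows "(\<lambda>N. (1 - p N) ^ m N) \<longlonglongrightarrow> exp (- L)"
proof -
  have pm: "(\<lambda>N. p N * real (m N)) \<longlonglongrightarrow> L"
  proof (rule tendsto_sandwich)
    show "eventually (\<lambda>N. p N * t N - p N \<le> p N * real (m N)) sequentially"
      using pp mt proof eventually_elim
        case (elim N)
        then have "p N * t N \<le> p N * (1 + real (m N))" by (intro mult_left_mono) auto
        then show ?case by (simp add: algebra_simps)
      qed
    show "eventually (\<lambda>N. p N * real (m N) \<le> p N * t N) sequentially"
      using pp mt by eventually_elim (auto intro!: mult_left_mono)
    show "(\<lambda>N. p N * t N - p N) \<longlonglongrightarrow> L" using tendsto_diff[OF pt p0] by simp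
  qed (rule pt)
  show ?thesis
  proof (rule tendsto_sandwich)
    show "eventually (\<lambda>N. exp (- (p N * real (m N) / (1 - p N))) \<le> (1 - p N) ^ m N) sequentially"
      using pp by eventually_elim (rule pow_bounds(1), auto)
    show "eventually (\<lambda>N. (1 - p N) ^ m N \<le> exp (- (p N * real (m N)))) sequentially"
      using pp by eventually_elim (rule pow_bounds(2), auto)
    show "(\<lambda>N. exp (- (p N * real (m N) / (1 - p N)))) \<longlonglongrightarrow> exp (- L)"
      using tendsto_exp[OF tendsto_minus[OF tendsto_divide[OF pm tendsto_diff[OF tendsto_const[of 1] p0]]]] by simp
    show "(\<lambda>N. exp (- (p N * real (m N)))) \<longlonglongrightarrow> exp (- L)"
      by (intro tendsto_intros pm)
  qed
qed

definition QQ :: "real \<Rightarrow> real \<Rightarrow> nat \<Rightarrow> real \<Rightarrow> real" where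
  "QQ \<kappa> \<beta> N x = measure_pmf.prob (geometric_pmf (geom_param \<kappa> \<beta> N))
      {k. x < real (k + 1) / (real (k + 1) + real N - 1)}"

definition hh :: "real \<Rightarrow> real \<Rightarrow> nat \<Rightarrow> nat \<Rightarrow> real \<Rightarrow> real" where
  "hh \<kappa> \<beta> n N x = indicator {0..<1} x * (real n * x ^ (n - 1)) * QQ \<kappa> \<beta> N x"

lemma p_pos: "0 < geom_param \<kappa> \<beta> N"
  by (simp add: geom_param_def)

lemma p_eq: "\<kappa> > 0 \<Longrightarrow> N > 0 \<Longrightarrow> geom_param \<kappa> \<beta> N = (\<kappa> * real N) powr (- \<beta>)"
  by (simp add: geom_param_def powr_def)

lemma s_eq:
  assumes "\<kappa> > 0" "N > 0"
  shows "geom_param \<kappa> \<beta> N * real N = \<kappa> powr (- \<beta>) * real N powr (1 - \<beta>)"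
proof -
  have e: "real N powr (1 - \<beta>) = real N powr (- \<beta>) * real N powr 1"
    by (subst powr_add[symmetric]) simp
  have "geom_param \<kappa> \<beta> N * real N = \<kappa> powr (- \<beta>) * real N powr (- \<beta>) * real N"
    using assms by (simp add: p_eq powr_mult)
  also have "\<dots> = \<kappa> powr (- \<beta>) * real N powr (1 - \<beta>)"
    using assms by (simp add: e)
  finally show ?thesis .
qed

lemma p_lim:
  assumes "\<kappa> > 0" "\<beta> > 0"
  shows "geom_param \<kappa> \<beta> \<longlonglongrightarrow> 0"
proof -
  have "filterlim (\<lambda>N. \<kappa> * real N) at_top sequentially"
    by (intro filterlim_tendsto_pos_mult_at_top[OF tendsto_const] assms filterlim_real_sequentially)
  then have "(\<lambda>N. (\<kappa> * real N) powr (- \<beta>)) \<longlonglongrightarrow> 0"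
    using assms by (intro tendsto_neg_powr) auto
  moreover have "eventually (\<lambda>N. (\<kappa> * real N) powr (- \<beta>) = geom_param \<kappa> \<beta> N) sequentially"
    using eventually_gt_at_top[of 0] by eventually_elim (use assms in \<open>simp add: p_eq\<close>)
  ultimately show ?thesis by (rule Lim_transform_eventually)
qed

lemma hh_meas:
  "hh \<kappa> \<beta> n N \<in> borel_measurable borel"
proof -
  have mono: "mono (\<lambda>x. - QQ \<kappa> \<beta> N x)"
    unfolding QQ_def by (auto simp: mono_def intro!: measure_pmf.finite_measure_mono)
  have q[measurable]: "(\<lambda>x. QQ \<kappa> \<beta> N x) \<in> borel_measurable borel"
    using borel_measurable_uminus[OF borel_measurable_mono[OF mono]] by simp
  show ?thesis
    unfolding hh_def[abs_def] by measurable
qed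

lemma QQ_nonneg: "0 \<le> QQ \<kappa> \<beta> N x" and QQ_le1: "QQ \<kappa> \<beta> N x \<le> 1"
  by (simp_all add: QQ_def)

lemma M_rep:
  assumes "N \<ge> 1" "n \<ge> 1"
  shows "M \<kappa> \<beta> N n = (\<integral>x. hh \<kappa> \<beta> n N x \<partial>lborel)"
proof -
  let ?P = "measure_pmf (geometric_pmf (geom_param \<kappa> \<beta> N))"
  let ?Z = "\<lambda>\<omega>::nat. real (\<omega> + 1) / (real (\<omega> + 1) + real N - 1)"
  have P: "prob_space ?P" by (rule measure_pmf.prob_space_axioms)
  have Zm: "?Z \<in> borel_measurable ?P" by simp
  have Zb: "0 \<le> ?Z \<omega> \<and> ?Z \<omega> \<le> 1" for \<omega>
  proof -
    have "real (\<omega> + 1) \<le> real (\<omega> + 1) + real N - 1" using assms by simp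
    moreover have "0 < real (\<omega> + 1)" by simp
    ultimately show ?thesis by (simp add: divide_le_eq_1)
  qed
  have T: "(\<integral>\<omega>. ?Z \<omega> ^ n \<partial>?P) = (\<integral>x. indicator {0..<1} x * (real n * x ^ (n - 1)) * measure ?P {\<omega>\<in>space ?P. x < ?Z \<omega>} \<partial>lborel)"
    by (rule tail_formula[OF P Zm Zb assms(2)])
  have "M \<kappa> \<beta> N n = (\<integral>\<omega>. ?Z \<omega> ^ n \<partial>?P)" by (simp only: M_def)
  also note T
  also have "(\<lambda>x. indicator {0..<1} x * (real n * x ^ (n - 1)) * measure ?P {\<omega>\<in>space ?P. x < ?Z \<omega>}) = hh \<kappa> \<beta> n N"
    by (rule ext) (simp only: hh_def QQ_def space_measure_pmf Set.mem_Collect_eq UNIV_I simp_thms)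
  finally show ?thesis .
qed

lemma dom_conv_ev:
  fixes s :: "nat \<Rightarrow> 'a \<Rightarrow> real" and MM :: "'a measure"
  assumes f: "f \<in> borel_measurable MM" and s: "\<And>i. s i \<in> borel_measurable MM" and w: "integrable MM w"
    and lim: "AE x in MM. (\<lambda>i. s i x) \<longlonglongrightarrow> f x"
    and bnd: "eventually (\<lambda>i. \<forall>x. \<bar>s i x\<bar> \<le> w x) sequentially"
  shows "(\<lambda>i. integral\<^sup>L MM (s i)) \<longlonglongrightarrow> integral\<^sup>L MM f"
proof -
  obtain N0 where N0: "\<And>i. i \<ge> N0 \<Longrightarrow> \<forall>x. \<bar>s i x\<bar> \<le> w x"
    using bnd by (auto simp: eventually_sequentially)
  have "(\<lambda>i. integral\<^sup>L MM (s (i + N0))) \<longlonglongrightarrow> integral\<^sup>L MM f"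
  proof (rule integral_dominated_convergence[OF f s w])
    show "AE x in MM. (\<lambda>i. s (i + N0) x) \<longlonglongrightarrow> f x"
      using lim by eventually_elim (rule LIMSEQ_ignore_initial_segment)
    show "AE x in MM. norm (s (i + N0) x) \<le> w x" for i
      using N0[of "i + N0"] by auto
  qed
  then show ?thesis by (rule LIMSEQ_offset)
qed

lemma Q_lim:
  fixes p x :: "nat \<Rightarrow> real"
  assumes p0: "p \<longlonglongrightarrow> 0" and ppos: "\<And>N. 0 < p N"
    and xr: "eventually (\<lambda>N. 0 \<le> x N \<and> x N < 1) sequentially"
    and lim: "(\<lambda>N. (p N * real N - p N) * (x N / (1 - x N))) \<longlonglongrightarrow> L"
  shows "(\<lambda>N. measure_pmf.prob (geometric_pmf (p N)) {k. x N < real (k + 1) / (real (k + 1) + real N - 1)}) \<longlonglongrightarrow> exp (- L)"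
proof -
  define t where "t N = x N * (real N - 1) / (1 - x N)" for N
  define m where "m N = nat \<lfloor>t N\<rfloor>" for N
  have p1: "eventually (\<lambda>N. p N < 1) sequentially"
    using order_tendstoD(2)[OF p0, of 1] by simp
  have N1: "eventually (\<lambda>N. N \<ge> 1) sequentially" by (rule eventually_ge_at_top)
  have "(\<lambda>N. (1 - p N) ^ m N) \<longlonglongrightarrow> exp (- L)"
  proof (rule geo_lim[OF p0])
    show "eventually (\<lambda>N. 0 \<le> p N \<and> p N < 1) sequentially"
      using p1 by eventually_elim (auto simp: less_imp_le ppos)
    have "eventually (\<lambda>N. (p N * real N - p N) * (x N / (1 - x N)) = p N * t N) sequentially"
      using xr by eventually_elim (auto simp: t_def field_simps)
    then show "(\<lambda>N. p N * t N) \<longlonglongrightarrow> L" using lim by (rule Lim_transform_eventually[rotated])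
    show "eventually (\<lambda>N. t N - 1 \<le> real (m N) \<and> real (m N) \<le> t N) sequentially"
      using xr N1
    proof eventually_elim
      case (elim N)
      then have "0 \<le> t N" by (auto simp: t_def)
      then have "real (m N) = of_int \<lfloor>t N\<rfloor>" by (simp add: m_def)
      then show ?case using floor_correct[of "t N"] by linarith
    qed
  qed
  moreover have "eventually (\<lambda>N. (1 - p N) ^ m N = measure_pmf.prob (geometric_pmf (p N)) {k. x N < real (k + 1) / (real (k + 1) + real N - 1)}) sequentially"
    using xr N1 p1 by eventually_elim (subst Q_formula, auto simp: m_def t_def ppos less_imp_le)
  ultimately show ?thesis by (rule Lim_transform_eventually)
qed

lemma case12:
  assumes \<kappa>: "\<kappa> > 0" and \<beta>: "\<beta> > 0" and n: "n \<ge> 1"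
    and sl: "(\<lambda>N. geom_param \<kappa> \<beta> N * real N) \<longlonglongrightarrow> S"
  shows "(\<lambda>N. M \<kappa> \<beta> N n) \<longlonglongrightarrow> (\<integral>x. indicator {0..<1} x * (real n * x ^ (n - 1)) * exp (- (S * (x / (1 - x)))) \<partial>lborel)"
proof -
  let ?f = "\<lambda>x. indicator {0..<1} x * (real n * x ^ (n - 1)) * exp (- (S * (x / (1 - x))))"
  let ?w = "\<lambda>x::real. real n * indicator {0..1} x"
  have p0: "geom_param \<kappa> \<beta> \<longlonglongrightarrow> 0" by (rule p_lim[OF \<kappa> \<beta>])
  have lim: "(\<lambda>N. integral\<^sup>L lborel (hh \<kappa> \<beta> n N)) \<longlonglongrightarrow> integral\<^sup>L lborel ?f"
  proof (rule dom_conv_ev)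
    show "?f \<in> borel_measurable lborel" unfolding measurable_lborel2 by measurable
    show "hh \<kappa> \<beta> n N \<in> borel_measurable lborel" for N
      unfolding measurable_lborel2 by (rule hh_meas)
    show "integrable lborel ?w"
      by (intro integrable_mult_right integrable_real_indicator) auto
    show "AE x in lborel. (\<lambda>N. hh \<kappa> \<beta> n N x) \<longlonglongrightarrow> ?f x"
    proof (rule AE_I2)
      fix x :: real
      show "(\<lambda>N. hh \<kappa> \<beta> n N x) \<longlonglongrightarrow> ?f x"
      proof (cases "x \<in> {0..<1}")
        case True
        have "(\<lambda>N. QQ \<kappa> \<beta> N x) \<longlonglongrightarrow> exp (- (S * (x / (1 - x))))"
          unfolding QQ_def
        proof (rule Q_lim[OF p0 p_pos])
          show "eventually (\<lambda>N. 0 \<le> x \<and> x < 1) sequentially" using True by auto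
          show "(\<lambda>N. (geom_param \<kappa> \<beta> N * real N - geom_param \<kappa> \<beta> N) * (x / (1 - x))) \<longlonglongrightarrow> S * (x / (1 - x))"
            using tendsto_mult[OF tendsto_diff[OF sl p0] tendsto_const[of "x / (1 - x)"]] by simp
        qed
        then show ?thesis unfolding hh_def by (rule tendsto_mult_left)
      next
        case False
        then show ?thesis by (simp add: hh_def)
      qed
    qed
    show "eventually (\<lambda>N. \<forall>x. \<bar>hh \<kappa> \<beta> n N x\<bar> \<le> ?w x) sequentially"
    proof (intro always_eventually allI)
      fix N x
      show "\<bar>hh \<kappa> \<beta> n N x\<bar> \<le> ?w x"
      proof (cases "x \<in> {0..<1}")
        case True
        then have x: "0 \<le> x ^ (n - 1)" "x ^ (n - 1) \<le> 1" by (auto intro: power_le_one)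
        have q: "0 \<le> QQ \<kappa> \<beta> N x" "QQ \<kappa> \<beta> N x \<le> 1" by (rule QQ_nonneg, rule QQ_le1)
        have le: "x ^ (n - 1) * QQ \<kappa> \<beta> N x \<le> 1" using x q by (metis mult_le_one)
        have nn: "0 \<le> x ^ (n - 1) * QQ \<kappa> \<beta> N x" using x q by simp
        have "hh \<kappa> \<beta> n N x = real n * (x ^ (n - 1) * QQ \<kappa> \<beta> N x)" using True by (simp add: hh_def)
        moreover have "real n * (x ^ (n - 1) * QQ \<kappa> \<beta> N x) \<le> real n"
          using le by (intro mult_left_le) auto
        ultimately show ?thesis using True nn by simp
      next
        case False
        then show ?thesis by (simp add: hh_def indicator_def)
      qed
    qed
  qed
  have ev: "eventually (\<lambda>N. integral\<^sup>L lborel (hh \<kappa> \<beta> n N) = M \<kappa> \<beta> N n) sequentially"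
    using eventually_ge_at_top[of 1]
  proof eventually_elim
    case (elim N)
    show ?case using M_rep[OF elim n] by simp
  qed
  show ?thesis using Lim_transform_eventually[OF lim ev] .
qed

lemma int_one:
  assumes n: "n \<ge> 1"
  shows "(\<integral>x. indicator {0..<1} x * (real n * x ^ (n - 1)) * exp (- (0 * (x / (1 - x)))) \<partial>lborel) = 1"
proof -
  let ?P = "measure_pmf (return_pmf (0::nat))"
  have T: "(\<integral>\<omega>. (\<lambda>_. 1::real) \<omega> ^ n \<partial>?P) = (\<integral>x. indicator {0..<1} x * (real n * x ^ (n - 1)) * measure ?P {\<omega>\<in>space ?P. x < (\<lambda>_. 1::real) \<omega>} \<partial>lborel)"
    by (rule tail_formula[OF measure_pmf.prob_space_axioms]) (use n in auto)
  have "(\<integral>x. indicator {0..<1} x * (real n * x ^ (n - 1)) * exp (- (0 * (x / (1 - x)))) \<partial>lborel)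
      = (\<integral>x. indicator {0..<1} x * (real n * x ^ (n - 1)) * measure ?P {\<omega>\<in>space ?P. x < (\<lambda>_. 1::real) \<omega>} \<partial>lborel)"
    by (intro Bochner_Integration.integral_cong refl) (auto simp: indicator_def)
  also have "\<dots> = 1" using T[symmetric] by simp
  finally show ?thesis .
qed

lemma erlang_integrable:
  assumes "0 < l"
  shows "integrable lborel (erlang_density k l)"
proof (rule integrableI_nonneg)
  show "erlang_density k l \<in> borel_measurable lborel" by simp
  show "AE x in lborel. 0 \<le> erlang_density k l x" using assms by (intro AE_I2) simp
  have "(\<integral>\<^sup>+ x. ennreal (erlang_density k l x * x ^ 0) \<partial>lborel) = fact (k + 0) / (fact k * l ^ 0)"
    by (rule nn_integral_erlang_ith_moment[OF assms])
  then show "(\<integral>\<^sup>+ x. ennreal (erlang_density k l x) \<partial>lborel) < \<infinity>" by simp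
qed

lemma int_gamma:
  assumes n: "n \<ge> 1"
  shows "(\<integral>u. indicator {0..} u * (real n * u ^ (n - 1)) * exp (- u) \<partial>lborel) = fact n"
proof -
  let ?f = "\<lambda>u::real. indicator {0..} u * (real n * u ^ (n - 1)) * exp (- u)"
  have "(\<integral>\<^sup>+u. ennreal (?f u) \<partial>lborel) = (\<integral>\<^sup>+u. ennreal (real n) * (ennreal (u ^ (n - 1) * exp (- u)) * indicator {0..} u) \<partial>lborel)"
    by (intro nn_integral_cong) (auto simp: indicator_def ennreal_mult mult.assoc)
  also have "\<dots> = ennreal (real n) * (\<integral>\<^sup>+u. ennreal (u ^ (n - 1) * exp (- u)) * indicator {0..} u \<partial>lborel)"
    by (rule nn_integral_cmult) measurable
  also have "\<dots> = ennreal (real n) * ennreal (fact (n - 1))"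
    by (simp add: nn_intergal_power_times_exp_Ici)
  also have "\<dots> = ennreal (real n * fact (n - 1))"
    by (rule ennreal_mult[symmetric]) auto
  also have "real n * fact (n - 1) = (fact n :: real)"
    using n by (cases n) (simp_all add: algebra_simps)
  finally have e: "(\<integral>\<^sup>+u. ennreal (?f u) \<partial>lborel) = ennreal (fact n)" .
  have "integral\<^sup>L lborel ?f = enn2real (\<integral>\<^sup>+u. ennreal (?f u) \<partial>lborel)"
    by (rule integral_eq_nn_integral) (auto simp: indicator_def intro!: AE_I2)
  also have "\<dots> = fact n" using e by simp
  finally show ?thesis .
qed

lemma key_ineq:
  fixes p u a :: real and N :: nat
  assumes p: "0 < p" and p1: "p \<le> 1" and a: "a = p * real N" and N: "N \<ge> 2" and u: "0 \<le> u" "u < a"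
  shows "u / 2 - 1 \<le> p * (u / a * (real N - 1) / (1 - u / a) - 1)"
proof -
  have a0: "0 < a" using u by linarith
  have "u / a * (real N - 1) / (1 - u / a) = u * (real N - 1) / (a - u)"
    using a0 u by (simp add: field_simps)
  moreover have "u * (real N - 1) / a \<le> u * (real N - 1) / (a - u)"
    using a0 u N by (intro divide_left_mono mult_nonneg_nonneg mult_pos_pos) auto
  moreover have "p * (u * (real N - 1) / a) = u * (real N - 1) / real N"
    using p a a0 N by (auto simp: field_simps)
  moreover have "u / 2 \<le> u * (real N - 1) / real N"
  proof -
    have "u * 2 \<le> u * real N" using N u by (intro mult_left_mono) auto
    then show ?thesis using N by (auto simp: field_simps)
  qed
  moreover have "p \<le> 1 \<or> True" by simp
  ultimately have "u / 2 \<le> p * (u / a * (real N - 1) / (1 - u / a))"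
    using p by (smt (verit) mult_left_mono)
  moreover have "p * (u / a * (real N - 1) / (1 - u / a) - 1) = p * (u / a * (real N - 1) / (1 - u / a)) - p"
    by (simp add: right_diff_distrib)
  ultimately show ?thesis using p1 by linarith
qed

lemma Q_upper:
  assumes "N \<ge> 1" "0 \<le> x" "x < 1" "0 < p" "p < 1"
  shows "measure_pmf.prob (geometric_pmf p) {k. x < real (k + 1) / (real (k + 1) + real N - 1)}
    \<le> exp (- (p * (x * (real N - 1) / (1 - x) - 1)))"
proof -
  define t where "t = x * (real N - 1) / (1 - x)"
  have t0: "0 \<le> t" using assms by (auto simp: t_def)
  have e: "real (nat \<lfloor>t\<rfloor>) = of_int \<lfloor>t\<rfloor>" using t0 by simp
  have m: "t - 1 \<le> real (nat \<lfloor>t\<rfloor>)" using e floor_correct[of t] by linarith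
  have "measure_pmf.prob (geometric_pmf p) {k. x < real (k + 1) / (real (k + 1) + real N - 1)} = (1 - p) ^ nat \<lfloor>t\<rfloor>"
    unfolding t_def by (rule Q_formula) (use assms in auto)
  also have "\<dots> \<le> exp (- (p * real (nat \<lfloor>t\<rfloor>)))" by (rule pow_bounds(2)) (use assms in auto)
  also have "\<dots> \<le> exp (- (p * (t - 1)))" using m assms by (simp add: mult_left_mono)
  finally show ?thesis by (simp add: t_def)
qed

lemma alg_w:
  fixes F T A E B X c v :: real
  assumes "F \<noteq> 0" "T * A = 1" "E * B = X"
  shows "E * c * T * F * (A * v * B / F) = c * v * X"
proof -
  have "E * c * T * F * (A * v * B / F) = c * v * (T * A) * (E * B) * (F / F)"
    by (simp add: field_simps)
  then show ?thesis using assms by simp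
qed

lemma case3:
  assumes \<kappa>: "\<kappa> > 0" and \<beta>: "\<beta> > 0" "\<beta> < 1" and n: "n \<ge> 1"
  shows "(\<lambda>N. (geom_param \<kappa> \<beta> N * real N) ^ n * M \<kappa> \<beta> N n) \<longlonglongrightarrow> fact n"
proof -
  define p where "p = geom_param \<kappa> \<beta>"
  define s where "s N = p N * real N" for N
  have p0: "p \<longlonglongrightarrow> 0" using p_lim[OF \<kappa> \<beta>(1)] by (simp add: p_def)
  have ppos: "0 < p N" for N by (simp add: p_def p_pos)
  have spos: "0 < s N" if "N \<ge> 1" for N using that by (simp add: s_def ppos)
  have sinv: "(\<lambda>N. inverse (s N)) \<longlonglongrightarrow> 0"
  proof -
    have "(\<lambda>N. real N powr (\<beta> - 1)) \<longlonglongrightarrow> 0"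
      using \<beta> by (intro tendsto_neg_powr filterlim_real_sequentially) auto
    then have "(\<lambda>N. \<kappa> powr \<beta> * real N powr (\<beta> - 1)) \<longlonglongrightarrow> \<kappa> powr \<beta> * 0"
      by (intro tendsto_mult tendsto_const)
    moreover have "eventually (\<lambda>N. \<kappa> powr \<beta> * real N powr (\<beta> - 1) = inverse (s N)) sequentially"
      using eventually_gt_at_top[of 0]
    proof eventually_elim
      case (elim N)
      have "inverse (s N) = inverse (\<kappa> powr (- \<beta>) * real N powr (1 - \<beta>))"
        using elim \<kappa> by (simp add: s_def p_def s_eq)
      also have "\<dots> = \<kappa> powr \<beta> * real N powr (\<beta> - 1)"
        by (simp add: inverse_mult_distrib powr_minus[symmetric])
      finally show ?case by simp
    qed
    ultimately show ?thesis using Lim_transform_eventually by force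
  qed
  have stop: "filterlim s at_top sequentially"
  proof -
    have "filterlim (\<lambda>N. inverse (inverse (s N))) at_top sequentially"
    proof (rule filterlim_inverse_at_top[OF sinv])
      show "eventually (\<lambda>N. 0 < inverse (s N)) sequentially"
        using eventually_ge_at_top[of "1::nat"] by eventually_elim (simp add: spos)
    qed
    then show ?thesis by simp
  qed
  define g where "g N u = s N ^ (n - 1) * hh \<kappa> \<beta> n N (u / s N)" for N u
  define f where "f u = indicator {0..} u * (real n * u ^ (n - 1)) * exp (- u)" for u :: real
  define C where "C = exp 1 * real n * 2 ^ n * fact (n - 1)"
  define w where "w u = C * erlang_density (n - 1) (1/2) u" for u
  have gform: "g N u = real n * u ^ (n - 1) * QQ \<kappa> \<beta> N (u / s N)"
    if "N \<ge> 1" "0 \<le> u" "u < s N" for N u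
  proof -
    have sN: "0 < s N" using spos that by auto
    have "u / s N \<in> {0..<1}" using that sN by auto
    then have "g N u = s N ^ (n - 1) * (real n * (u / s N) ^ (n - 1) * QQ \<kappa> \<beta> N (u / s N))"
      by (simp add: g_def hh_def)
    also have "\<dots> = real n * u ^ (n - 1) * QQ \<kappa> \<beta> N (u / s N)"
      using sN by (simp add: power_divide)
    finally show ?thesis .
  qed
  have gzero: "g N u = 0" if "\<not> (0 \<le> u / s N \<and> u / s N < 1)" for N u
    using that by (simp add: g_def hh_def)
  have rep: "eventually (\<lambda>N. integral\<^sup>L lborel (g N) = s N ^ n * M \<kappa> \<beta> N n) sequentially"
    using eventually_ge_at_top[of 1]
  proof eventually_elim
    case (elim N)
    have sN: "0 < s N" using spos elim by auto
    have "M \<kappa> \<beta> N n = integral\<^sup>L lborel (hh \<kappa> \<beta> n N)" by (rule M_rep[OF elim n])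
    also have "\<dots> = \<bar>1 / s N\<bar> *\<^sub>R (\<integral>u. hh \<kappa> \<beta> n N (0 + (1 / s N) * u) \<partial>lborel)"
      by (rule lborel_integral_real_affine) (use sN in auto)
    also have "\<dots> = (1 / s N) * (\<integral>u. hh \<kappa> \<beta> n N (u / s N) \<partial>lborel)"
      using sN by simp
    finally have "s N ^ n * M \<kappa> \<beta> N n = s N ^ n * (1 / s N) * (\<integral>u. hh \<kappa> \<beta> n N (u / s N) \<partial>lborel)"
      by simp
    also have "s N ^ n * (1 / s N) = s N ^ (n - 1)"
      using sN n by (cases n) auto
    also have "s N ^ (n - 1) * (\<integral>u. hh \<kappa> \<beta> n N (u / s N) \<partial>lborel) = integral\<^sup>L lborel (g N)"
      unfolding g_def by simp
    finally show ?case by simp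
  qed
  have lim: "(\<lambda>N. integral\<^sup>L lborel (g N)) \<longlonglongrightarrow> integral\<^sup>L lborel f"
  proof (rule dom_conv_ev)
    show "f \<in> borel_measurable lborel" unfolding f_def measurable_lborel2 by measurable
    show "g N \<in> borel_measurable lborel" for N
    proof -
      have h[measurable]: "hh \<kappa> \<beta> n N \<in> borel_measurable borel" by (rule hh_meas)
      show ?thesis unfolding g_def[abs_def] measurable_lborel2 by measurable
    qed
    show "integrable lborel w"
      unfolding w_def by (intro integrable_mult_right erlang_integrable) auto
    show "AE u in lborel. (\<lambda>N. g N u) \<longlonglongrightarrow> f u"
    proof (rule AE_I2)
      fix u :: real
      show "(\<lambda>N. g N u) \<longlonglongrightarrow> f u"
      proof (cases "u < 0")
        case True
        have "eventually (\<lambda>N. 0 = g N u) sequentially"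
          using eventually_ge_at_top[of "1::nat"]
        proof eventually_elim
          case (elim N)
          then have "u / s N < 0" using spos[OF elim] True by (simp add: divide_neg_pos)
          then show ?case by (intro gzero[symmetric]) auto
        qed
        moreover have "f u = 0" using True by (simp add: f_def)
        ultimately show ?thesis using Lim_transform_eventually[OF tendsto_const] by metis
      next
        case False
        then have u0: "0 \<le> u" by simp
        have ev_su: "eventually (\<lambda>N. u < s N) sequentially"
          using filterlim_iff[THEN iffD1, OF stop, rule_format, OF eventually_gt_at_top[of u]] .
        have Ql: "(\<lambda>N. QQ \<kappa> \<beta> N (u / s N)) \<longlonglongrightarrow> exp (- u)"
          unfolding QQ_def
        proof (rule Q_lim[OF p0[unfolded p_def] p_pos])
          show "eventually (\<lambda>N. 0 \<le> u / s N \<and> u / s N < 1) sequentially"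
            using ev_su eventually_ge_at_top[of "1::nat"]
            by eventually_elim (use u0 spos in auto)
          have "(\<lambda>N. u * (1 - p N * inverse (s N)) / (1 - u * inverse (s N))) \<longlonglongrightarrow> u * (1 - 0 * 0) / (1 - u * 0)"
            by (intro tendsto_intros p0 sinv) auto
          then have l: "(\<lambda>N. u * (1 - p N * inverse (s N)) / (1 - u * inverse (s N))) \<longlonglongrightarrow> u" by simp
          have "eventually (\<lambda>N. u * (1 - p N * inverse (s N)) / (1 - u * inverse (s N))
              = (geom_param \<kappa> \<beta> N * real N - geom_param \<kappa> \<beta> N) * (u / s N / (1 - u / s N))) sequentially"
            using ev_su eventually_ge_at_top[of "1::nat"]
          proof eventually_elim
            case (elim N)
            have sN: "0 < s N" using spos elim by auto
            have d: "s N - u \<noteq> 0" using elim by auto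
            have e: "geom_param \<kappa> \<beta> N * real N = s N" by (simp add: s_def p_def)
            show ?case apply (subst e) using sN d by (simp add: p_def[symmetric] field_simps)
          qed
          then show "(\<lambda>N. (geom_param \<kappa> \<beta> N * real N - geom_param \<kappa> \<beta> N) * (u / s N / (1 - u / s N))) \<longlonglongrightarrow> u"
            using l by (rule Lim_transform_eventually[rotated])
        qed
        have "(\<lambda>N. real n * u ^ (n - 1) * QQ \<kappa> \<beta> N (u / s N)) \<longlonglongrightarrow> real n * u ^ (n - 1) * exp (- u)"
          by (rule tendsto_mult_left[OF Ql])
        moreover have "eventually (\<lambda>N. real n * u ^ (n - 1) * QQ \<kappa> \<beta> N (u / s N) = g N u) sequentially"
          using ev_su eventually_ge_at_top[of "1::nat"]
          by eventually_elim (simp add: gform u0)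
        ultimately have "(\<lambda>N. g N u) \<longlonglongrightarrow> real n * u ^ (n - 1) * exp (- u)"
          by (rule Lim_transform_eventually)
        then show ?thesis using u0 by (simp add: f_def)
      qed
    qed
    have p1: "eventually (\<lambda>N. p N < 1) sequentially"
      using order_tendstoD(2)[OF p0, of 1] by simp
    show "eventually (\<lambda>N. \<forall>u. \<bar>g N u\<bar> \<le> w u) sequentially"
      using p1 eventually_ge_at_top[of "2::nat"]
    proof eventually_elim
      case (elim N)
      have sN: "0 < s N" using spos elim by auto
      show ?case
      proof
        fix u :: real
        have wnn: "0 \<le> w u" unfolding w_def C_def by (intro mult_nonneg_nonneg) auto
        show "\<bar>g N u\<bar> \<le> w u"
        proof (cases "0 \<le> u / s N \<and> u / s N < 1")
          case False
          then show ?thesis using gzero[OF False] wnn by simp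
        next
          case True
          then have u0: "0 \<le> u" and us: "u < s N" using sN by (auto simp: divide_less_eq zero_le_divide_iff)
          have Qb: "QQ \<kappa> \<beta> N (u / s N) \<le> exp (- (p N * (u / s N * (real N - 1) / (1 - u / s N) - 1)))"
            unfolding QQ_def p_def[symmetric] by (rule Q_upper) (use elim True ppos in auto)
          have ki: "u / 2 - 1 \<le> p N * (u / s N * (real N - 1) / (1 - u / s N) - 1)"
            by (rule key_ineq[OF ppos]) (use elim u0 us in \<open>auto simp: s_def\<close>)
          have Qb2: "QQ \<kappa> \<beta> N (u / s N) \<le> exp (1 - u / 2)"
            using Qb ki by (smt (verit) exp_le_cancel_iff)
          have "\<bar>g N u\<bar> = real n * u ^ (n - 1) * QQ \<kappa> \<beta> N (u / s N)"
            using gform[of N u] elim u0 us by (simp add: QQ_nonneg)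
          also have "\<dots> \<le> real n * u ^ (n - 1) * exp (1 - u / 2)"
            using Qb2 u0 by (intro mult_left_mono) auto
          also have "\<dots> = w u"
          proof -
            obtain m where nm: "n = Suc m" using n by (cases n) auto
            have T: "(2::real) ^ n * (1 / 2) ^ n = 1" by (simp add: power_mult_distrib[symmetric])
            have E: "exp 1 * exp (- (1 / 2) * u) = exp (1 - u / 2)" by (simp add: exp_add[symmetric])
            have F: "(fact m :: real) \<noteq> 0" by simp
            have e1: "erlang_density (n - 1) (1/2) u = (1/2) ^ n * u ^ (n - 1) * exp (- (1/2) * u) / fact m"
              using u0 by (simp add: erlang_density_def nm)
            have "w u = exp 1 * real n * 2 ^ n * fact m * ((1/2) ^ n * u ^ (n - 1) * exp (- (1/2) * u) / fact m)"
              unfolding w_def C_def e1 using nm by simp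
            also have "\<dots> = real n * u ^ (n - 1) * exp (1 - u / 2)"
              by (rule alg_w[OF F T E])
            finally show ?thesis ..
          qed
          finally show ?thesis .
        qed
      qed
    qed
  qed
  have "(\<lambda>N. s N ^ n * M \<kappa> \<beta> N n) \<longlonglongrightarrow> fact n"
  proof -
    have "integral\<^sup>L lborel f = fact n" unfolding f_def[abs_def] by (rule int_gamma[OF n])
    then show ?thesis using Lim_transform_eventually[OF lim rep] by simp
  qed
  then show ?thesis by (simp add: s_def p_def)
qed

lemma target_eq:
  assumes \<kappa>: "\<kappa> > 0" and N: "N > 0"
  shows "fact n * \<kappa> powr (real n * \<beta>) * real N powr (- (real n * (1 - \<beta>))) * (geom_param \<kappa> \<beta> N * real N) ^ n = fact n"
proof -
  have N': "0 < real N" using N by simp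
  have k: "(\<kappa> powr (- \<beta>)) ^ n = \<kappa> powr (- \<beta> * real n)"
    using \<kappa> by (subst powr_realpow[symmetric]) (auto simp: powr_powr)
  have nn: "(real N powr (1 - \<beta>)) ^ n = real N powr ((1 - \<beta>) * real n)"
    using N' by (subst powr_realpow[symmetric]) (auto simp: powr_powr)
  have k2: "\<kappa> powr (real n * \<beta>) * \<kappa> powr (- \<beta> * real n) = 1"
    using \<kappa> by (simp add: powr_add[symmetric])
  have n2: "real N powr (- (real n * (1 - \<beta>))) * real N powr ((1 - \<beta>) * real n) = 1"
    using N' by (simp add: powr_add[symmetric])
  have "(geom_param \<kappa> \<beta> N * real N) ^ n = \<kappa> powr (- \<beta> * real n) * real N powr ((1 - \<beta>) * real n)"
    using \<kappa> N by (simp add: s_eq power_mult_distrib k nn)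
  then have "fact n * \<kappa> powr (real n * \<beta>) * real N powr (- (real n * (1 - \<beta>))) * (geom_param \<kappa> \<beta> N * real N) ^ n
     = fact n * (\<kappa> powr (real n * \<beta>) * \<kappa> powr (- \<beta> * real n)) * (real N powr (- (real n * (1 - \<beta>))) * real N powr ((1 - \<beta>) * real n))"
    by (simp add: ac_simps)
  also have "\<dots> = fact n" by (simp only: k2 n2 mult_1_right)
  finally show ?thesis .
qed

theorem lemma3p1:
  fixes \<kappa> \<beta> :: real and n :: nat
  assumes "\<kappa> > 0" and "\<beta> > 0"
  shows "(\<beta> > 1 \<longrightarrow> ((\<lambda>N. M \<kappa> \<beta> N n) \<longlonglongrightarrow> 1))
    \<and> (\<beta> = 1 \<longrightarrow> (\<forall>(P :: 'a measure) (Y :: 'a \<Rightarrow> real).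
          prob_space P \<longrightarrow> Y \<in> borel_measurable P
          \<longrightarrow> (\<forall>\<omega>\<in>space P. 0 \<le> Y \<omega> \<and> Y \<omega> \<le> 1)
          \<longrightarrow> (\<forall>x. 0 \<le> x \<and> x < 1 \<longrightarrow>
                 measure P {\<omega>\<in>space P. Y \<omega> > x} = exp (- (x / (\<kappa> * (1 - x)))))
          \<longrightarrow> ((\<lambda>N. M \<kappa> \<beta> N n) \<longlonglongrightarrow> (\<integral>\<omega>. Y \<omega> ^ n \<partial>P))))
    \<and> (\<beta> < 1 \<longrightarrow> (\<lambda>N. M \<kappa> \<beta> N n) \<sim>[at_top]
          (\<lambda>N. fact n * \<kappa> powr (real n * \<beta>) * real N powr (- (real n * (1 - \<beta>)))))"
proof (cases "n = 0")
  case True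
  have M1: "M \<kappa> \<beta> N n = 1" for N using True by (simp add: M_def)
  show ?thesis
  proof (intro conjI impI allI)
    show "(\<lambda>N. M \<kappa> \<beta> N n) \<longlonglongrightarrow> 1" by (simp add: M1)
  next
    fix P :: "'a measure" and Y :: "'a \<Rightarrow> real"
    assume P: "prob_space P"
    have "(\<integral>\<omega>. Y \<omega> ^ n \<partial>P) = 1"
      using True prob_space.prob_space[OF P] by simp
    then show "(\<lambda>N. M \<kappa> \<beta> N n) \<longlonglongrightarrow> (\<integral>\<omega>. Y \<omega> ^ n \<partial>P)" by (simp add: M1)
  next
    assume "\<beta> < 1"
    show "(\<lambda>N. M \<kappa> \<beta> N n) \<sim>[at_top] (\<lambda>N. fact n * \<kappa> powr (real n * \<beta>) * real N powr (- (real n * (1 - \<beta>))))"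
    proof (rule asymp_equivI')
      have "eventually (\<lambda>N. 1 = M \<kappa> \<beta> N n / (fact n * \<kappa> powr (real n * \<beta>) * real N powr (- (real n * (1 - \<beta>))))) at_top"
        using eventually_gt_at_top[of "0::nat"] by eventually_elim (use assms(1) M1 in \<open>simp add: True\<close>)
      then show "((\<lambda>N. M \<kappa> \<beta> N n / (fact n * \<kappa> powr (real n * \<beta>) * real N powr (- (real n * (1 - \<beta>))))) \<longlongrightarrow> 1) at_top"
        by (rule Lim_transform_eventually[OF tendsto_const])
    qed
  qed
next
  case False
  then have n: "n \<ge> 1" by simp
  note \<kappa> = assms(1) and \<beta> = assms(2)
  have seq: "eventually (\<lambda>N. \<kappa> powr (- \<beta>) * real N powr (1 - \<beta>) = geom_param \<kappa> \<beta> N * real N) sequentially"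
    using eventually_gt_at_top[of "0::nat"] by eventually_elim (simp add: s_eq \<kappa>)
  show ?thesis
  proof (intro conjI impI allI)
    assume b1: "\<beta> > 1"
    have "(\<lambda>N. real N powr (1 - \<beta>)) \<longlonglongrightarrow> 0"
      using b1 by (intro tendsto_neg_powr filterlim_real_sequentially) auto
    then have "(\<lambda>N. \<kappa> powr (- \<beta>) * real N powr (1 - \<beta>)) \<longlonglongrightarrow> \<kappa> powr (- \<beta>) * 0"
      by (intro tendsto_mult tendsto_const)
    then have sl: "(\<lambda>N. geom_param \<kappa> \<beta> N * real N) \<longlonglongrightarrow> 0"
      using Lim_transform_eventually[OF _ seq] by simp
    show "(\<lambda>N. M \<kappa> \<beta> N n) \<longlonglongrightarrow> 1"
      using case12[OF \<kappa> \<beta> n sl] int_one[OF n] by simp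
  next
    fix P :: "'a measure" and Y :: "'a \<Rightarrow> real"
    assume b1: "\<beta> = 1" and P: "prob_space P" and Ym: "Y \<in> borel_measurable P"
      and Yb: "\<forall>\<omega>\<in>space P. 0 \<le> Y \<omega> \<and> Y \<omega> \<le> 1"
      and Yt: "\<forall>x. 0 \<le> x \<and> x < 1 \<longrightarrow> measure P {\<omega>\<in>space P. Y \<omega> > x} = exp (- (x / (\<kappa> * (1 - x))))"
    have "eventually (\<lambda>N. \<kappa> powr (- \<beta>) = geom_param \<kappa> \<beta> N * real N) sequentially"
      using seq eventually_gt_at_top[of "0::nat"] by eventually_elim (simp add: b1)
    then have sl: "(\<lambda>N. geom_param \<kappa> \<beta> N * real N) \<longlonglongrightarrow> inverse \<kappa>"
      using Lim_transform_eventually[OF tendsto_const] b1 \<kappa> by (simp add: powr_minus)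
    have T: "(\<integral>\<omega>. Y \<omega> ^ n \<partial>P) = (\<integral>x. indicator {0..<1} x * (real n * x ^ (n - 1)) * measure P {\<omega>\<in>space P. x < Y \<omega>} \<partial>lborel)"
      by (rule tail_formula[OF P Ym _ n]) (use Yb in auto)
    have "(\<integral>x. indicator {0..<1} x * (real n * x ^ (n - 1)) * exp (- (inverse \<kappa> * (x / (1 - x)))) \<partial>lborel)
        = (\<integral>x. indicator {0..<1} x * (real n * x ^ (n - 1)) * measure P {\<omega>\<in>space P. x < Y \<omega>} \<partial>lborel)"
    proof (intro Bochner_Integration.integral_cong refl)
      fix x :: real
      show "indicator {0..<1} x * (real n * x ^ (n - 1)) * exp (- (inverse \<kappa> * (x / (1 - x))))
          = indicator {0..<1} x * (real n * x ^ (n - 1)) * measure P {\<omega>\<in>space P. x < Y \<omega>}"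
      proof (cases "x \<in> {0..<1}")
        case True
        then have "measure P {\<omega>\<in>space P. x < Y \<omega>} = exp (- (x / (\<kappa> * (1 - x))))" using Yt by auto
        moreover have "inverse \<kappa> * (x / (1 - x)) = x / (\<kappa> * (1 - x))" by (simp add: field_simps)
        ultimately show ?thesis by simp
      qed simp
    qed
    then show "(\<lambda>N. M \<kappa> \<beta> N n) \<longlonglongrightarrow> (\<integral>\<omega>. Y \<omega> ^ n \<partial>P)"
      using case12[OF \<kappa> \<beta> n sl] T by simp
  next
    assume b1: "\<beta> < 1"
    have c3: "(\<lambda>N. (geom_param \<kappa> \<beta> N * real N) ^ n * M \<kappa> \<beta> N n) \<longlonglongrightarrow> fact n"
      by (rule case3[OF \<kappa> \<beta> b1 n])
    show "(\<lambda>N. M \<kappa> \<beta> N n) \<sim>[at_top] (\<lambda>N. fact n * \<kappa> powr (real n * \<beta>) * real N powr (- (real n * (1 - \<beta>))))"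
    proof (rule asymp_equivI')
      have "(\<lambda>N. (geom_param \<kappa> \<beta> N * real N) ^ n * M \<kappa> \<beta> N n / fact n) \<longlonglongrightarrow> fact n / fact n"
        by (intro tendsto_divide c3 tendsto_const) simp
      then have l: "(\<lambda>N. (geom_param \<kappa> \<beta> N * real N) ^ n * M \<kappa> \<beta> N n / fact n) \<longlonglongrightarrow> 1" by simp
      have "eventually (\<lambda>N. (geom_param \<kappa> \<beta> N * real N) ^ n * M \<kappa> \<beta> N n / fact n
          = M \<kappa> \<beta> N n / (fact n * \<kappa> powr (real n * \<beta>) * real N powr (- (real n * (1 - \<beta>))))) sequentially"
        using eventually_gt_at_top[of "0::nat"]
      proof eventually_elim
        case (elim N)
        define A where "A = fact n * \<kappa> powr (real n * \<beta>) * real N powr (- (real n * (1 - \<beta>)))"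
        define B where "B = (geom_param \<kappa> \<beta> N * real N) ^ n"
        have AB: "A * B = fact n" unfolding A_def B_def by (rule target_eq[OF \<kappa> elim])
        have "A \<noteq> 0" using AB by auto
        then have eq: "M \<kappa> \<beta> N n / A = B * M \<kappa> \<beta> N n / (A * B)" using AB by (auto simp: field_simps)
        have "B * M \<kappa> \<beta> N n / fact n = M \<kappa> \<beta> N n / A" using eq by (simp only: AB)
        then show ?case by (simp only: A_def B_def)
      qed
      then show "((\<lambda>N. M \<kappa> \<beta> N n / (fact n * \<kappa> powr (real n * \<beta>) * real N powr (- (real n * (1 - \<beta>))))) \<longlongrightarrow> 1) at_top"
        using l by (rule Lim_transform_eventually[rotated])
    qed
  qed
qed

end
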